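(* Let $(Z^n_k)_{n\in\mathbb N,1\le k\le n}$ be a triangular array of nonnegative, uniformly integrable random variables such that for each $n\in\mathbb N$ the random variables $Z^n_1,\dots,Z^n_n$ are pairwise uncorrelated. Then $\frac1n\sum_{k=1}^n(Z^n_k-EZ^n_k)\to0$ in probability as $n\to\infty$.
   Context: Random variables are only assumed integrable (no finite second moments are assumed); "pairwise uncorrelated" means $E[Z^n_kZ^n_l]=E[Z^n_k]E[Z^n_l]$ for $k\ne l$ (with the product integrable). *)

theory Defs
  imports "HOL-Probability.Probability"
begin

definition uniformly_integrable :: "'a measure \<Rightarrow> ('a \<Rightarrow> real) set \<Rightarrow> bool" where
  "uniformly_integrable M F \<longleftrightarrow>
     (\<forall>f\<in>F. integrable M f) \<and>
     (\<forall>e>0. \<exists>c. \<forall>f\<in>F.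
        (\<integral>x. \<bar>f x\<bar> * indicator {y\<in>space M. c \<le> \<bar>f y\<bar>} x \<partial>M) \<le> e)"

definition converges_in_probability ::
    "'a measure \<Rightarrow> (nat \<Rightarrow> 'a \<Rightarrow> real) \<Rightarrow> ('a \<Rightarrow> real) \<Rightarrow> bool" where
  "converges_in_probability M X Y \<longleftrightarrow>
     (\<forall>e>0. (\<lambda>n. measure M {x\<in>space M. e < \<bar>X n x - Y x\<bar>}) \<longlonglongrightarrow> 0)"

end

theory Submission imports Defs begin

lemma var_bound:
  fixes Y :: "'i \<Rightarrow> 'a \<Rightarrow> real"
  assumes P: "prob_space M" and fin: "finite I"
    and meas: "\<And>i. i\<in>I \<Longrightarrow> Y i \<in> borel_measurable M"
    and bnd: "\<And>i x. i\<in>I \<Longrightarrow> x\<in>space M \<Longrightarrow> 0 \<le> Y i x \<and> Y i x \<le> c"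
    and off: "\<And>i j. i\<in>I \<Longrightarrow> j\<in>I \<Longrightarrow> i\<noteq>j \<Longrightarrow>
       (\<integral>x. Y i x * Y j x \<partial>M) - (\<integral>x. Y i x \<partial>M)*(\<integral>x. Y j x \<partial>M) \<le> d"
    and d: "0 \<le> d"
  shows "integrable M (\<lambda>x. ((\<Sum>i\<in>I. Y i x) - (\<Sum>i\<in>I. \<integral>y. Y i y \<partial>M))\<^sup>2) \<and>
     (\<integral>x. ((\<Sum>i\<in>I. Y i x) - (\<Sum>i\<in>I. \<integral>y. Y i y \<partial>M))\<^sup>2 \<partial>M)
      \<le> real (card I) * c\<^sup>2 + (real (card I))\<^sup>2 * d"
proof -
  interpret prob_space M by fact
  have intY: "integrable M (Y i)" if "i\<in>I" for i
    by (rule integrable_const_bound[where B=c]) (use bnd that meas in auto)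
  have intYY: "integrable M (\<lambda>x. Y i x * Y j x)" if "i\<in>I" "j\<in>I" for i j
  proof (rule integrable_const_bound[where B="c*c"])
    show "AE x in M. norm (Y i x * Y j x) \<le> c * c"
    proof (intro AE_I2)
      fix x assume x: "x \<in> space M"
      show "norm (Y i x * Y j x) \<le> c * c"
        using bnd[OF that(1) x] bnd[OF that(2) x] by (auto simp: abs_mult intro!: mult_mono)
    qed
  qed (use meas that in auto)
  define S where "S x = (\<Sum>i\<in>I. Y i x)" for x
  have sq: "(S x)\<^sup>2 = (\<Sum>i\<in>I. \<Sum>j\<in>I. Y i x * Y j x)" for x
    by (simp add: S_def power2_eq_square sum_product)
  have intS: "integrable M S" unfolding S_def using intY by auto
  have intS2: "integrable M (\<lambda>x. (S x)\<^sup>2)" unfolding sq using intYY by auto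
  have ES: "expectation S = (\<Sum>i\<in>I. expectation (Y i))"
    unfolding S_def using intY by (simp add: Bochner_Integration.integral_sum)
  have ES2: "expectation (\<lambda>x. (S x)\<^sup>2) = (\<Sum>i\<in>I. \<Sum>j\<in>I. expectation (\<lambda>x. Y i x * Y j x))"
  proof -
    have "expectation (\<lambda>x. (S x)\<^sup>2) = expectation (\<lambda>x. \<Sum>i\<in>I. \<Sum>j\<in>I. Y i x * Y j x)"
      by (simp only: sq)
    also have "\<dots> = (\<Sum>i\<in>I. expectation (\<lambda>x. \<Sum>j\<in>I. Y i x * Y j x))"
      by (rule Bochner_Integration.integral_sum) (use intYY in auto)
    also have "\<dots> = (\<Sum>i\<in>I. \<Sum>j\<in>I. expectation (\<lambda>x. Y i x * Y j x))"
      by (intro sum.cong refl Bochner_Integration.integral_sum) (use intYY in auto)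
    finally show ?thesis .
  qed
  have "(\<integral>x. ((\<Sum>i\<in>I. Y i x) - (\<Sum>i\<in>I. \<integral>y. Y i y \<partial>M))\<^sup>2 \<partial>M) = variance S"
    by (simp add: ES S_def)
  also have "\<dots> = expectation (\<lambda>x. (S x)\<^sup>2) - (expectation S)\<^sup>2"
    by (rule variance_eq[OF intS intS2])
  also have "\<dots> = (\<Sum>i\<in>I. \<Sum>j\<in>I. expectation (\<lambda>x. Y i x * Y j x) - expectation (Y i) * expectation (Y j))"
    unfolding ES2 ES by (simp add: power2_eq_square sum_product sum_subtractf)
  also have "\<dots> \<le> (\<Sum>i\<in>I. \<Sum>j\<in>I. (if i = j then c\<^sup>2 else 0) + d)"
  proof (intro sum_mono)
    fix i j assume ij: "i\<in>I" "j\<in>I"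
    show "expectation (\<lambda>x. Y i x * Y j x) - expectation (Y i) * expectation (Y j)
        \<le> (if i = j then c\<^sup>2 else 0) + d"
    proof (cases "i = j")
      case True
      have "expectation (\<lambda>x. Y i x * Y i x) \<le> expectation (\<lambda>x. c * c)"
        using bnd[OF ij(1)] intYY[OF ij(1) ij(1)]
        by (intro integral_mono_AE AE_I2) (auto intro!: mult_mono dest: order_trans)
      then have e: "expectation (\<lambda>x. Y i x * Y i x) \<le> c * c" by (simp add: prob_space)
      have "0 \<le> expectation (Y i) * expectation (Y i)" by simp
      then show ?thesis using True d e unfolding power2_eq_square by (simp del: mult_nonneg_nonneg zero_le_mult_iff zero_le_square)
    next
      case False
      then show ?thesis using off[OF ij False] by simp
    qed
  qed
  also have "\<dots> = real (card I) * c\<^sup>2 + (real (card I))\<^sup>2 * d"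
    using fin by (simp add: sum.distrib power2_eq_square algebra_simps)
  finally have V: "(\<integral>x. ((\<Sum>i\<in>I. Y i x) - (\<Sum>i\<in>I. \<integral>y. Y i y \<partial>M))\<^sup>2 \<partial>M)
      \<le> real (card I) * c\<^sup>2 + (real (card I))\<^sup>2 * d" .
  have eq: "(\<lambda>x. ((\<Sum>i\<in>I. Y i x) - (\<Sum>i\<in>I. \<integral>y. Y i y \<partial>M))\<^sup>2)
     = (\<lambda>x. (S x)\<^sup>2 - (2 * expectation S) * S x + (expectation S)\<^sup>2)"
    by (auto simp: power2_diff S_def ES)
  have "integrable M (\<lambda>x. ((\<Sum>i\<in>I. Y i x) - (\<Sum>i\<in>I. \<integral>y. Y i y \<partial>M))\<^sup>2)"
    unfolding eq using intS intS2 by simp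
  with V show ?thesis by blast
qed

lemma absb: "0 < (t::real) \<Longrightarrow> \<bar>b\<bar> \<le> b\<^sup>2 / (2*t) + t/2"
proof -
  assume t: "0 < t"
  have "0 \<le> (\<bar>b\<bar> - t)\<^sup>2" by simp
  hence "2*t*\<bar>b\<bar> \<le> b\<^sup>2 + t\<^sup>2" by (simp add: power2_diff power2_abs mult_ac)
  thus ?thesis using t by (simp add: field_simps power2_eq_square)
qed


lemma key:
  fixes X :: "'i \<Rightarrow> 'a \<Rightarrow> real"
  assumes P: "prob_space M" and fin: "finite I" and ne: "I \<noteq> {}"
    and meas: "\<And>i. i\<in>I \<Longrightarrow> X i \<in> borel_measurable M"
    and nn: "\<And>i x. i\<in>I \<Longrightarrow> x\<in>space M \<Longrightarrow> 0 \<le> X i x"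
    and intX: "\<And>i. i\<in>I \<Longrightarrow> integrable M (X i)"
    and unc: "\<And>i j. i\<in>I \<Longrightarrow> j\<in>I \<Longrightarrow> i\<noteq>j \<Longrightarrow> integrable M (\<lambda>x. X i x * X j x) \<and>
        (\<integral>x. X i x * X j x \<partial>M) = (\<integral>x. X i x \<partial>M) * (\<integral>x. X j x \<partial>M)"
    and K: "\<And>i. i\<in>I \<Longrightarrow> (\<integral>x. X i x \<partial>M) \<le> K"
    and c: "0 < c"
    and tail: "\<And>i. i\<in>I \<Longrightarrow> (\<integral>x. max (X i x - c) 0 \<partial>M) \<le> \<delta>"
    and t: "0 < t"
  shows "(\<integral>x. \<bar>(1 / real (card I)) * (\<Sum>i\<in>I. X i x - (\<integral>y. X i y \<partial>M))\<bar> \<partial>M)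
     \<le> (c\<^sup>2 / real (card I) + 2*K*\<delta>) / (2*t) + t/2 + 2*\<delta>"
proof -
  interpret prob_space M by fact
  define N where "N = real (card I)"
  have N: "0 < N" using fin ne by (simp add: N_def card_gt_0_iff)
  define Y where "Y i x = min (X i x) c" for i x
  define W where "W i x = X i x - Y i x" for i x
  have mY: "Y i \<in> borel_measurable M" if "i\<in>I" for i
  proof -
    note [measurable] = meas[OF that]
    show ?thesis unfolding Y_def by measurable
  qed
  have Yb: "0 \<le> Y i x \<and> Y i x \<le> c" if "i\<in>I" "x\<in>space M" for i x
    using nn[OF that] c by (auto simp: Y_def)
  have YX: "Y i x \<le> X i x" for i x by (simp add: Y_def)
  have intY: "integrable M (Y i)" if "i\<in>I" for i
    by (rule integrable_const_bound[where B=c]) (use Yb[OF that] mY[OF that] in auto)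
  have intW: "integrable M (W i)" if "i\<in>I" for i
    unfolding W_def using intX[OF that] intY[OF that] by simp
  have Wnn: "0 \<le> W i x" for i x by (simp add: W_def YX)
  have Wmax: "W i x = max (X i x - c) 0" for i x by (simp add: W_def Y_def)
  have EW: "(\<integral>x. W i x \<partial>M) = (\<integral>x. X i x \<partial>M) - (\<integral>x. Y i x \<partial>M)" if "i\<in>I" for i
    unfolding W_def using intX[OF that] intY[OF that] by simp
  have EWd: "(\<integral>x. W i x \<partial>M) \<le> \<delta>" if "i\<in>I" for i
    using tail[OF that] by (simp add: Wmax)
  have EWnn: "0 \<le> (\<integral>x. W i x \<partial>M)" for i using Wnn by simp
  have EYnn: "0 \<le> (\<integral>x. Y i x \<partial>M)" if "i\<in>I" for i
    using Yb[OF that] by (simp add: integral_nonneg)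
  have EXnn: "0 \<le> (\<integral>x. X i x \<partial>M)" if "i\<in>I" for i
    using nn[OF that] by (simp add: integral_nonneg)
  obtain i0 where i0: "i0 \<in> I" using ne by auto
  have d0: "0 \<le> \<delta>" using EWd[OF i0] EWnn[of i0] by linarith
  have K0: "0 \<le> K" using K[OF i0] EXnn[OF i0] by linarith
  have off: "(\<integral>x. Y i x * Y j x \<partial>M) - (\<integral>x. Y i x \<partial>M)*(\<integral>x. Y j x \<partial>M) \<le> 2*K*\<delta>"
    if ij: "i\<in>I" "j\<in>I" "i\<noteq>j" for i j
  proof -
    have intYY: "integrable M (\<lambda>x. Y i x * Y j x)"
    proof (rule integrable_const_bound[where B="c*c"])
      show "AE x in M. norm (Y i x * Y j x) \<le> c * c"
      proof (intro AE_I2)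
        fix x assume x: "x \<in> space M"
        show "norm (Y i x * Y j x) \<le> c * c"
          using Yb[OF ij(1) x] Yb[OF ij(2) x] by (auto simp: abs_mult intro!: mult_mono)
      qed
    qed (use mY ij in auto)
    have "(\<integral>x. Y i x * Y j x \<partial>M) \<le> (\<integral>x. X i x * X j x \<partial>M)"
      using intYY unc[OF ij] Yb[OF ij(1)] Yb[OF ij(2)] YX nn[OF ij(1)]
      by (intro integral_mono) (auto intro!: mult_mono)
    also have "\<dots> = (\<integral>x. X i x \<partial>M) * (\<integral>x. X j x \<partial>M)" using unc[OF ij] by simp
    finally have 1: "(\<integral>x. Y i x * Y j x \<partial>M) \<le> (\<integral>x. X i x \<partial>M) * (\<integral>x. X j x \<partial>M)" .
    have 2: "(\<integral>x. X i x \<partial>M) * (\<integral>x. X j x \<partial>M) - (\<integral>x. Y i x \<partial>M)*(\<integral>x. Y j x \<partial>M)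
       = (\<integral>x. X i x \<partial>M) * (\<integral>x. W j x \<partial>M) + (\<integral>x. Y j x \<partial>M) * (\<integral>x. W i x \<partial>M)"
      unfolding EW[OF ij(1)] EW[OF ij(2)] by (simp add: algebra_simps)
    have 3: "(\<integral>x. X i x \<partial>M) * (\<integral>x. W j x \<partial>M) \<le> K * \<delta>"
      using K[OF ij(1)] EWd[OF ij(2)] EXnn[OF ij(1)] EWnn[of j] K0 by (intro mult_mono) auto
    have 4: "(\<integral>x. Y j x \<partial>M) * (\<integral>x. W i x \<partial>M) \<le> K * \<delta>"
      using K[OF ij(2)] EW[OF ij(2)] EWnn[of j] EWd[OF ij(1)] EYnn[OF ij(2)] EWnn[of i] K0
      by (intro mult_mono) auto
    show ?thesis using 1 2 3 4 by linarith
  qed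
  have d: "0 \<le> 2*K*\<delta>" using K0 d0 by simp
  define V where "V x = ((\<Sum>i\<in>I. Y i x) - (\<Sum>i\<in>I. \<integral>y. Y i y \<partial>M))\<^sup>2" for x
  have VB: "integrable M V \<and> (\<integral>x. V x \<partial>M) \<le> N * c\<^sup>2 + N\<^sup>2 * (2*K*\<delta>)"
    unfolding V_def N_def by (rule var_bound[OF P fin mY Yb off d])
  define WS where "WS x = (\<Sum>i\<in>I. W i x)" for x
  define EWS where "EWS = (\<Sum>i\<in>I. \<integral>y. W i y \<partial>M)"
  have EWS: "EWS \<le> N * \<delta>" unfolding EWS_def N_def
    using sum_mono[of I "\<lambda>i. \<integral>y. W i y \<partial>M" "\<lambda>i. \<delta>"] EWd by auto
  have EWS0: "0 \<le> EWS" unfolding EWS_def using EWnn by (simp add: sum_nonneg)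
  have intWS: "integrable M WS" unfolding WS_def using intW by auto
  have IWS: "(\<integral>x. WS x \<partial>M) = EWS" unfolding WS_def EWS_def
    by (rule Bochner_Integration.integral_sum) (use intW in auto)
  define G where "G x = V x / (N\<^sup>2 * (2*t)) + t/2 + (WS x + EWS) / N" for x
  have pw: "\<bar>(1 / real (card I)) * (\<Sum>i\<in>I. X i x - (\<integral>y. X i y \<partial>M))\<bar> \<le> G x" for x
  proof -
    define D where "D = (\<Sum>i\<in>I. Y i x) - (\<Sum>i\<in>I. \<integral>y. Y i y \<partial>M)"
    have "(\<Sum>i\<in>I. X i x - (\<integral>y. X i y \<partial>M))
        = (\<Sum>i\<in>I. (Y i x - (\<integral>y. Y i y \<partial>M)) + (W i x - (\<integral>y. W i y \<partial>M)))"
      by (rule sum.cong) (simp_all add: EW W_def[of _ x])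
    also have "\<dots> = D + (WS x - EWS)"
      by (simp add: D_def WS_def EWS_def sum.distrib sum_subtractf)
    finally have dec: "(\<Sum>i\<in>I. X i x - (\<integral>y. X i y \<partial>M)) = D + (WS x - EWS)" .
    have WS0: "0 \<le> WS x" unfolding WS_def using Wnn by (simp add: sum_nonneg)
    have "\<bar>(1 / real (card I)) * (\<Sum>i\<in>I. X i x - (\<integral>y. X i y \<partial>M))\<bar>
        = \<bar>D / N + (WS x - EWS) / N\<bar>" by (simp add: dec N_def add_divide_distrib)
    also have "\<dots> \<le> \<bar>D / N\<bar> + \<bar>WS x - EWS\<bar> / N" using N by (simp add: abs_triangle_ineq[THEN order_trans])
    also have "\<bar>D / N\<bar> \<le> (D/N)\<^sup>2 / (2*t) + t/2" by (rule absb[OF t])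
    also have "\<bar>WS x - EWS\<bar> \<le> WS x + EWS" using WS0 EWS0 by linarith
    also have "(D/N)\<^sup>2 / (2*t) = V x / (N\<^sup>2 * (2*t))"
      by (simp add: V_def D_def power_divide)
    finally show ?thesis using N unfolding G_def by (simp add: divide_right_mono)
  qed
  have intA: "integrable M (\<lambda>x. \<bar>(1 / real (card I)) * (\<Sum>i\<in>I. X i x - (\<integral>y. X i y \<partial>M))\<bar>)"
    using intX by (intro integrable_abs integrable_mult_right Bochner_Integration.integrable_sum) auto
  have intG: "integrable M G" unfolding G_def using VB intWS by auto
  have "(\<integral>x. \<bar>(1 / real (card I)) * (\<Sum>i\<in>I. X i x - (\<integral>y. X i y \<partial>M))\<bar> \<partial>M) \<le> (\<integral>x. G x \<partial>M)"
    by (rule integral_mono[OF intA intG pw])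
  also have "(\<integral>x. G x \<partial>M) = (\<integral>x. V x \<partial>M) / (N\<^sup>2 * (2*t)) + t/2 + (EWS + EWS) / N"
    unfolding G_def using VB intWS by (simp add: IWS add_divide_distrib prob_space)
  also have "(\<integral>x. V x \<partial>M) / (N\<^sup>2 * (2*t)) \<le> (N * c\<^sup>2 + N\<^sup>2 * (2*K*\<delta>)) / (N\<^sup>2 * (2*t))"
    using VB N t by (intro divide_right_mono) auto
  also have "(N * c\<^sup>2 + N\<^sup>2 * (2*K*\<delta>)) / (N\<^sup>2 * (2*t)) = (c\<^sup>2 / real (card I) + 2*K*\<delta>) / (2*t)"
    using N t by (simp add: N_def field_simps power2_eq_square)
  also have "(EWS + EWS) / N \<le> 2 * \<delta>" using EWS N by (simp add: field_simps)
  finally show ?thesis by simp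
qed


theorem mainTheorem14:
  fixes M :: "'a measure" and Z :: "nat \<Rightarrow> nat \<Rightarrow> 'a \<Rightarrow> real"
  assumes "prob_space M"
    and meas: "\<And>n k. 1 \<le> k \<Longrightarrow> k \<le> n \<Longrightarrow> Z n k \<in> borel_measurable M"
    and nonneg: "\<And>n k x. 1 \<le> k \<Longrightarrow> k \<le> n \<Longrightarrow> x \<in> space M \<Longrightarrow> 0 \<le> Z n k x"
    and ui: "uniformly_integrable M {Z n k | n k. 1 \<le> k \<and> k \<le> n}"
    and uncorr: "\<And>n k l. 1 \<le> k \<Longrightarrow> k \<le> n \<Longrightarrow> 1 \<le> l \<Longrightarrow> l \<le> n \<Longrightarrow> k \<noteq> l \<Longrightarrow>
        integrable M (\<lambda>x. Z n k x * Z n l x) \<and>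
        (\<integral>x. Z n k x * Z n l x \<partial>M) = (\<integral>x. Z n k x \<partial>M) * (\<integral>x. Z n l x \<partial>M)"
  shows "converges_in_probability M
           (\<lambda>n x. (1 / real n) * (\<Sum>k=1..n. Z n k x - (\<integral>y. Z n k y \<partial>M))) (\<lambda>x. 0)"
proof -
  interpret prob_space M by fact
  have ZI: "integrable M (Z n k)" if "1 \<le> k" "k \<le> n" for n k
    using ui that unfolding uniformly_integrable_def by blast
  have uie: "\<exists>c. \<forall>n k. 1 \<le> k \<longrightarrow> k \<le> n \<longrightarrow>
      (\<integral>x. \<bar>Z n k x\<bar> * indicator {y\<in>space M. c \<le> \<bar>Z n k y\<bar>} x \<partial>M) \<le> e" if e: "e > 0" for e
  proof -
    obtain c where "\<forall>f\<in>{Z n k | n k. 1 \<le> k \<and> k \<le> n}.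
        (\<integral>x. \<bar>f x\<bar> * indicator {y\<in>space M. c \<le> \<bar>f y\<bar>} x \<partial>M) \<le> e"
      using ui e unfolding uniformly_integrable_def by blast
    then show ?thesis by blast
  qed
  have intind: "integrable M (\<lambda>x. \<bar>Z n k x\<bar> * indicator {y\<in>space M. c \<le> \<bar>Z n k y\<bar>} x)"
    if "1 \<le> k" "k \<le> n" for n k c
  proof (rule Bochner_Integration.integrable_bound[OF integrable_abs[OF ZI[OF that]]])
    note [measurable] = meas[OF that]
    show "(\<lambda>x. \<bar>Z n k x\<bar> * indicator {y\<in>space M. c \<le> \<bar>Z n k y\<bar>} x) \<in> borel_measurable M"
      by measurable
    show "AE x in M. norm (\<bar>Z n k x\<bar> * indicator {y\<in>space M. c \<le> \<bar>Z n k y\<bar>} x) \<le> norm \<bar>Z n k x\<bar>"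
      by (intro AE_I2) (auto simp: indicator_def)
  qed
  obtain c1 where c1: "\<And>n k. 1 \<le> k \<Longrightarrow> k \<le> n \<Longrightarrow>
      (\<integral>x. \<bar>Z n k x\<bar> * indicator {y\<in>space M. c1 \<le> \<bar>Z n k y\<bar>} x \<partial>M) \<le> 1"
    using uie[of 1] by auto
  define K where "K = 1 + max c1 0"
  have K1: "1 \<le> K" by (simp add: K_def)
  have KB: "(\<integral>x. Z n k x \<partial>M) \<le> K" if "1 \<le> k" "k \<le> n" for n k
  proof -
    have "(\<integral>x. Z n k x \<partial>M) \<le> (\<integral>x. \<bar>Z n k x\<bar> * indicator {y\<in>space M. c1 \<le> \<bar>Z n k y\<bar>} x + max c1 0 \<partial>M)"
      by (intro integral_mono ZI[OF that] Bochner_Integration.integrable_add intind[OF that])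
         (auto simp: indicator_def)
    also have "\<dots> \<le> K" using c1[OF that] intind[OF that] by (simp add: K_def prob_space)
    finally show ?thesis .
  qed
  have tail: "\<exists>c>0. \<forall>n k. 1 \<le> k \<longrightarrow> k \<le> n \<longrightarrow> (\<integral>x. max (Z n k x - c) 0 \<partial>M) \<le> \<delta>"
    if dpos: "\<delta> > 0" for \<delta>
  proof -
    obtain c where c: "\<And>n k. 1 \<le> k \<Longrightarrow> k \<le> n \<Longrightarrow>
      (\<integral>x. \<bar>Z n k x\<bar> * indicator {y\<in>space M. c \<le> \<bar>Z n k y\<bar>} x \<partial>M) \<le> \<delta>"
      using uie[OF dpos] by auto
    have "(\<integral>x. max (Z n k x - max c 1) 0 \<partial>M) \<le> \<delta>" if "1 \<le> k" "k \<le> n" for n k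
    proof -
      have "(\<integral>x. max (Z n k x - max c 1) 0 \<partial>M)
          \<le> (\<integral>x. \<bar>Z n k x\<bar> * indicator {y\<in>space M. c \<le> \<bar>Z n k y\<bar>} x \<partial>M)"
        using nonneg[OF that] ZI[OF that] intind[OF that]
        by (intro integral_mono) (auto simp: indicator_def)
      then show ?thesis using c[OF that] by linarith
    qed
    then show ?thesis by (intro exI[of _ "max c 1"]) auto
  qed
  show ?thesis
    unfolding converges_in_probability_def
  proof (intro allI impI LIMSEQ_I)
    fix \<epsilon> r :: real assume \<epsilon>: "0 < \<epsilon>" and r: "0 < r"
    define \<eta> where "\<eta> = r * \<epsilon>"
    have \<eta>: "0 < \<eta>" using \<epsilon> r by (simp add: \<eta>_def)
    define \<delta> where "\<delta> = min (\<eta>/8) (\<eta>\<^sup>2/(20*K))"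
    have \<delta>: "0 < \<delta>" using \<eta> K1 by (simp add: \<delta>_def)
    obtain c where c: "0 < c" and
      ct: "\<And>n k. 1 \<le> k \<Longrightarrow> k \<le> n \<Longrightarrow> (\<integral>x. max (Z n k x - c) 0 \<partial>M) \<le> \<delta>"
      using tail[OF \<delta>] by auto
    define t where "t = \<eta>/3"
    have t: "0 < t" using \<eta> by (simp add: t_def)
    define no where "no = nat \<lceil>10 * c\<^sup>2 / \<eta>\<^sup>2\<rceil> + 1"
    show "\<exists>no. \<forall>n\<ge>no. norm (measure M {x\<in>space M. \<epsilon> < \<bar>(1 / real n) * (\<Sum>k=1..n. Z n k x - (\<integral>y. Z n k y \<partial>M)) - 0\<bar>} - 0) < r"
    proof (intro exI allI impI)
      fix n assume n: "no \<le> n"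
      have n1: "1 \<le> n" using n by (simp add: no_def)
      define A where "A x = \<bar>(1 / real n) * (\<Sum>k=1..n. Z n k x - (\<integral>y. Z n k y \<partial>M))\<bar>" for x
      have bound: "(\<integral>x. A x \<partial>M) \<le> (c\<^sup>2 / real n + 2*K*\<delta>) / (2*t) + t/2 + 2*\<delta>"
        using key[of M "{1..n}" "Z n" K c \<delta> t] meas nonneg ZI uncorr KB ct c t \<open>prob_space M\<close> n1
        unfolding A_def by simp
      have intA: "integrable M A" unfolding A_def using ZI
        by (intro integrable_abs integrable_mult_right Bochner_Integration.integrable_sum) auto
      have "measure M {x\<in>space M. \<epsilon> < \<bar>(1 / real n) * (\<Sum>k=1..n. Z n k x - (\<integral>y. Z n k y \<partial>M)) - 0\<bar>}
          \<le> measure M {x\<in>space M. \<epsilon> \<le> A x}"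
      proof (rule finite_measure_mono)
        note [measurable] = borel_measurable_integrable[OF intA]
        show "{x \<in> space M. \<epsilon> \<le> A x} \<in> sets M" by measurable
      qed (auto simp: A_def)
      also have "\<dots> \<le> (\<integral>x. A x \<partial>M) / \<epsilon>"
        by (rule integral_Markov_inequality_measure[OF intA _ _ \<epsilon>, of "space M"]) (auto simp: A_def)
      also have "\<dots> < r"
      proof -
        have "10 * c\<^sup>2 / \<eta>\<^sup>2 \<le> real n" using n unfolding no_def by linarith
        hence "c\<^sup>2 / real n \<le> \<eta>\<^sup>2 / 10" using \<eta> n1 by (simp add: field_simps)
        moreover have "2*K*\<delta> \<le> \<eta>\<^sup>2 / 10"
        proof -
          have "\<delta> \<le> \<eta>\<^sup>2/(20*K)" by (simp add: \<delta>_def)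
          then have "2*K*\<delta> \<le> 2*K*(\<eta>\<^sup>2/(20*K))" using K1 by (intro mult_left_mono) auto
          also have "\<dots> = \<eta>\<^sup>2 / 10" using K1 by simp
          finally show ?thesis .
        qed
        moreover have "2*\<delta> \<le> \<eta>/4" unfolding \<delta>_def by simp
        ultimately have s1: "c\<^sup>2 / real n + 2*K*\<delta> \<le> \<eta>\<^sup>2/5" and s2: "2*\<delta> \<le> \<eta>/4" by linarith+
        have "(c\<^sup>2 / real n + 2*K*\<delta>) / (2*t) \<le> (\<eta>\<^sup>2/5) / (2*t)"
          using t s1 by (intro divide_right_mono) auto
        then have "(c\<^sup>2 / real n + 2*K*\<delta>) / (2*t) + t/2 + 2*\<delta> \<le> (\<eta>\<^sup>2/5) / (2*t) + t/2 + \<eta>/4"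
          using s2 by linarith
        also have "\<dots> < \<eta>" using \<eta> unfolding t_def by (simp add: field_simps power2_eq_square)
        finally have "(\<integral>x. A x \<partial>M) < \<eta>" using bound by linarith
        thus ?thesis using \<epsilon> unfolding \<eta>_def by (simp add: field_simps)
      qed
      finally show "norm (measure M {x\<in>space M. \<epsilon> < \<bar>(1 / real n) * (\<Sum>k=1..n. Z n k x - (\<integral>y. Z n k y \<partial>M)) - 0\<bar>} - 0) < r"
        by simp
    qed
  qed
qed

end
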